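(* Let $W\ge1$ be an integer and let $\mathcal H$ be a real Hilbert space of dimension $d\in\{1,2,\ldots\}\cup\{\infty\}$ (written $\mathcal H\cong\mathbb R^d$). Let $\Phi:\mathbb R^W\to\mathcal H$ be differentiable with Lipschitz-continuous differential. Suppose a set $G\subset\mathcal H$ is the image of the $W$-dimensional sphere $\mathbb S^W=\{\mathbf y\in\mathbb R^{W+1}:\|\mathbf y\|=1\}$ under a continuous injective map $g:\mathbb S^W\to\mathcal H$. Then $G\not\subset F_\Phi$.
   Context: For a target $\mathbf f\in\mathcal H$, let $L_{\mathbf f}(\mathbf w)=\frac12\|\mathbf f-\Phi(\mathbf w)\|^2_{\mathcal H}$ and let $\mathbf w(t)$, $t\ge0$, be the (unique, globally defined) solution of the gradient flow $\frac{d\mathbf w}{dt}=-\nabla_{\mathbf w}L_{\mathbf f}(\mathbf w(t))$ with $\mathbf w(0)=\mathbf 0$. The set of GF-learnable targets is $F_\Phi=\{\mathbf f\in\mathcal H:\inf_{t\ge0}L_{\mathbf f}(\mathbf w(t))=0\}$. *)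

theory Defs
  imports "HOL-Analysis.Analysis"
begin

definition loss :: "('w \<Rightarrow> 'h::real_normed_vector) \<Rightarrow> 'h \<Rightarrow> 'w \<Rightarrow> real" where
  "loss Phi f w = (1/2) * (norm (f - Phi w))\<^sup>2"

definition is_GF_solution ::
  "('w::euclidean_space \<Rightarrow> 'h::real_normed_vector) \<Rightarrow> 'h \<Rightarrow> (real \<Rightarrow> 'w) \<Rightarrow> bool" where
  "is_GF_solution Phi f w \<longleftrightarrow> w 0 = 0 \<and>
     (\<forall>t\<ge>0. \<exists>gr::'w. (loss Phi f has_derivative (\<lambda>h. gr \<bullet> h)) (at (w t))
                    \<and> (w has_vector_derivative (- gr)) (at t within {0..}))"

definition F_learnable :: "('w::euclidean_space \<Rightarrow> 'h::real_normed_vector) \<Rightarrow> 'h set" where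
  "F_learnable Phi = {f. \<exists>w. is_GF_solution Phi f w \<and> (INF t\<in>{0..}. loss Phi f (w t)) = 0}"

end

theory Submission
  imports Defs
begin



lemma sphere_no_factor:
  fixes k :: "'b::euclidean_space \<Rightarrow> 'w::euclidean_space" and F :: "'w \<Rightarrow> 'b"
  assumes dim: "DIM('w) < DIM('b)"
    and contk: "continuous_on (sphere 0 1) k"
    and contF: "continuous_on UNIV F"
    and close: "\<And>y. y \<in> sphere 0 1 \<Longrightarrow> norm (F (k y) - y) < 1"
  shows False
proof -
  define S where "S = sphere (0::'b) 1"
  define C where "C = k ` S"
  define N where "N = (\<lambda>z. F z /\<^sub>R norm (F z))"
  have Fnz: "F z \<noteq> 0" if "z \<in> C" for z
  proof
    assume "F z = 0"
    from that obtain y where y: "y \<in> S" "z = k y" unfolding C_def by auto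
    with close[of y] \<open>F z = 0\<close> show False by (auto simp: S_def)
  qed
  have compC: "compact C" unfolding C_def S_def
    by (intro compact_continuous_image contk compact_sphere)
  have contN: "continuous_on C N" unfolding N_def
    using Fnz by (intro continuous_intros continuous_on_subset[OF contF]) auto
  have Nim: "N \<in> C \<rightarrow> rel_frontier (cball (0::'b) 1)"
    using Fnz by (auto simp: N_def)
  obtain a where a: "C \<subseteq> cbox (-a) a"
    using bounded_subset_cbox_symmetric compC compact_imp_bounded by blast
  obtain r where contr: "continuous_on (\<Union>{cbox (-a) a}) r"
    and rim: "r \<in> (\<Union>{cbox (-a) a}) \<rightarrow> rel_frontier (cball (0::'b) 1)"
    and rN: "\<And>x. x \<in> C \<Longrightarrow> r x = N x"
  proof (rule extend_map_cell_complex_to_sphere[of "{cbox (-a) a}" C "cball 0 1" N])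
    show "aff_dim X < aff_dim (cball (0::'b) 1)" if "X \<in> {cbox (- a) a}" for X
      using aff_dim_le_DIM[of X] dim by (simp add: aff_dim_cball)
  qed (use a compC compact_imp_closed contN Nim polytope_interval face_of_refl[OF convex_box(1)] in auto)
  have rim': "r \<in> cbox (-a) a \<rightarrow> sphere 0 1" using rim by simp
  obtain c where hc: "homotopic_with_canon (\<lambda>h. True) (cbox (-a) a) (sphere 0 1) r (\<lambda>x. c)"
    using nullhomotopic_from_contractible[of "cbox (-a) a" r "sphere 0 1", OF _ rim' convex_imp_contractible[OF convex_box(1)]] contr by auto
  have kim: "k \<in> S \<rightarrow> cbox (-a) a" using a unfolding C_def by auto
  have h1: "homotopic_with_canon (\<lambda>h. True) S (sphere 0 1) (r \<circ> k) ((\<lambda>x. c) \<circ> k)"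
    by (rule homotopic_with_compose_continuous_right[OF _ contk[folded S_def] kim]) (use hc in simp)
  have h2: "homotopic_with_canon (\<lambda>z. True) S (- {0}) id (F \<circ> k)"
  proof (rule homotopic_with_linear)
    show "continuous_on S id" by (simp add: continuous_on_id)
    show "continuous_on S (F \<circ> k)" unfolding S_def
      by (rule continuous_on_compose[OF contk continuous_on_subset[OF contF]]) auto
    show "closed_segment (id x) ((F \<circ> k) x) \<subseteq> - {0}" if "x \<in> S" for x
    proof
      fix z assume "z \<in> closed_segment (id x) ((F \<circ> k) x)"
      then obtain u where u: "0 \<le> u" "u \<le> 1" "z = (1 - u) *\<^sub>R x + u *\<^sub>R F (k x)"
        by (auto simp: closed_segment_def)
      have "z - x = u *\<^sub>R (F (k x) - x)" using u by (simp add: algebra_simps)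
      then have "norm (z - x) = u * norm (F (k x) - x)" using u by simp
      also have "\<dots> < 1" using close[of x] that u unfolding S_def
        by (smt (verit, ccfv_SIG) mult_left_le_one_le norm_ge_zero)
      finally have "norm (z - x) < 1" .
      moreover have "norm x = 1" using that by (simp add: S_def)
      ultimately show "z \<in> - {0}" by auto
    qed
  qed
  have h3: "homotopic_with_canon (\<lambda>z. True) S (sphere 0 1) ((\<lambda>z. z /\<^sub>R norm z) \<circ> id) ((\<lambda>z. z /\<^sub>R norm z) \<circ> (F \<circ> k))"
  proof (rule homotopic_with_compose_continuous_left)
    show "homotopic_with_canon (\<lambda>f. True) S (- {0}) id (F \<circ> k)" using h2 by simp
    show "continuous_on (- {0}) (\<lambda>z::'b. z /\<^sub>R norm z)" by (auto intro!: continuous_intros)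
    show "(\<lambda>z::'b. z /\<^sub>R norm z) \<in> - {0} \<rightarrow> sphere 0 1" by (auto simp: norm_divide)
  qed
  have h4: "homotopic_with_canon (\<lambda>z. True) S (sphere 0 1) id (r \<circ> k)"
    by (rule homotopic_with_eq[OF h3]) (auto simp: S_def rN C_def N_def)
  have "homotopic_with_canon (\<lambda>z. True) S S id (\<lambda>x. c)"
    using homotopic_with_trans[OF h4 h1] by (simp add: S_def o_def)
  then have "contractible S" unfolding contractible_def by blast
  then show False by (simp add: S_def contractible_sphere)
qed

lemma unif_near_compact:
  fixes e :: "'a::metric_space \<Rightarrow> 'c::metric_space"
  assumes "compact K" "continuous_on UNIV e" "\<epsilon> > 0"
  shows "\<exists>\<delta>>0. \<forall>x\<in>K. \<forall>z. dist z x < \<delta> \<longrightarrow> dist (e z) (e x) < \<epsilon>"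
proof -
  define \<G> where "\<G> = (\<lambda>x. e -` ball (e x) (\<epsilon>/2)) ` K"
  have opn: "open G" if "G \<in> \<G>" for G
    using that assms(2) unfolding \<G>_def continuous_on_open_vimage[OF open_UNIV] by auto
  have sub: "K \<subseteq> \<Union>\<G>" unfolding \<G>_def using assms(3) by auto
  obtain \<delta> where d: "0 < \<delta>" "\<And>x. x \<in> K \<Longrightarrow> \<exists>G \<in> \<G>. ball x \<delta> \<subseteq> G"
    using Heine_Borel_lemma[OF assms(1) sub opn] by blast
  have "dist (e z) (e x) < \<epsilon>" if xz: "x \<in> K" "dist z x < \<delta>" for x z
  proof -
    obtain x0 where "x0 \<in> K" "ball x \<delta> \<subseteq> e -` ball (e x0) (\<epsilon>/2)"
      using d(2)[OF xz(1)] unfolding \<G>_def by auto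
    moreover have "z \<in> ball x \<delta>" "x \<in> ball x \<delta>" using xz d(1) by (auto simp: dist_commute)
    ultimately have "e z \<in> ball (e x0) (\<epsilon>/2)" "e x \<in> ball (e x0) (\<epsilon>/2)"
      by blast+
    then have "dist (e z) (e x0) < \<epsilon>/2" "dist (e x) (e x0) < \<epsilon>/2"
      by (auto simp: dist_commute)
    then show ?thesis using dist_triangle2[of "e z" "e x" "e x0"] by linarith
  qed
  then show ?thesis using d(1) by blast
qed

lemma extend_inverse:
  fixes g :: "'b::euclidean_space \<Rightarrow> 'h::metric_space"
  assumes "compact S" "continuous_on S g" "inj_on g S"
  obtains e where "continuous_on UNIV e" "\<And>y. y \<in> S \<Longrightarrow> e (g y) = y"
proof -
  define K where "K = g ` S"
  define gi where "gi = the_inv_into S g"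
  have contgi: "continuous_on K gi" unfolding K_def gi_def
    by (rule continuous_on_inv_into[OF assms(2,1,3)])
  have gi: "gi (g y) = y" if "y \<in> S" for y
    unfolding gi_def using the_inv_into_f_f[OF assms(3) that] .
  have closedK: "closed K" unfolding K_def
    by (intro compact_imp_closed compact_continuous_image assms)
  have normal: "normal_space (euclidean :: 'h topology)"
    by (simp add: metrizable_imp_normal_space metrizable_space_euclidean)
  have "\<exists>E. continuous_on UNIV E \<and> (\<forall>x\<in>K. E x = gi x \<bullet> b)" for b
  proof -
    have cm: "continuous_map (subtopology euclidean K) euclideanreal (\<lambda>x. gi x \<bullet> b)"
      using contgi by (auto intro!: continuous_intros)
    obtain E where "continuous_map euclidean euclideanreal E" "\<And>x. x \<in> K \<Longrightarrow> E x = gi x \<bullet> b"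
      using Tietze_extension_realinterval[OF normal _ _ _ cm, of UNIV] closedK by auto
    then show ?thesis by auto
  qed
  then obtain E where E: "\<And>b. continuous_on UNIV (E b)" "\<And>b x. x \<in> K \<Longrightarrow> E b x = gi x \<bullet> b"
    by metis
  define e where "e = (\<lambda>z. \<Sum>b\<in>Basis. E b z *\<^sub>R b)"
  show ?thesis
  proof
    show "continuous_on UNIV e" unfolding e_def
      by (intro continuous_intros E(1))
    show "e (g y) = y" if "y \<in> S" for y
    proof -
      have "g y \<in> K" using that by (simp add: K_def)
      then have "e (g y) = (\<Sum>b\<in>Basis. (y \<bullet> b) *\<^sub>R b)"
        unfolding e_def using E(2) gi[OF that] by simp
      then show ?thesis by (simp add: euclidean_representation)
    qed
  qed
qed

lemma no_approx_factor:
  fixes g :: "'b::euclidean_space \<Rightarrow> 'h::metric_space" and Phi :: "'w::euclidean_space \<Rightarrow> 'h"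
  assumes dim: "DIM('w) < DIM('b)"
    and contg: "continuous_on (sphere 0 1) g" and inj: "inj_on g (sphere 0 1)"
    and contPhi: "continuous_on UNIV Phi"
  obtains \<epsilon> where "\<epsilon> > 0"
    "\<And>k. continuous_on (sphere 0 1) k \<Longrightarrow> \<exists>y\<in>sphere 0 1. dist (Phi (k y)) (g y) \<ge> \<epsilon>"
proof -
  obtain e where conte: "continuous_on UNIV e" and eg: "\<And>y. y \<in> sphere 0 1 \<Longrightarrow> e (g y) = y"
    using extend_inverse[OF compact_sphere contg inj] by blast
  obtain \<delta> where d: "\<delta> > 0" "\<forall>x\<in>g ` sphere 0 1. \<forall>z. dist z x < \<delta> \<longrightarrow> dist (e z) (e x) < 1"
    using unif_near_compact[OF compact_continuous_image[OF contg compact_sphere] conte, of 1] by auto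
  show ?thesis
  proof (rule that[OF d(1)])
    fix k :: "'b \<Rightarrow> 'w" assume contk: "continuous_on (sphere 0 1) k"
    show "\<exists>y\<in>sphere 0 1. dist (Phi (k y)) (g y) \<ge> \<delta>"
    proof (rule ccontr)
      assume "\<not> ?thesis"
      then have cl: "dist (Phi (k y)) (g y) < \<delta>" if "y \<in> sphere 0 1" for y
        using that by force
      show False
      proof (rule sphere_no_factor[OF dim contk])
        show "continuous_on UNIV (e \<circ> Phi)"
          by (rule continuous_on_compose[OF contPhi continuous_on_subset[OF conte]]) auto
        show "norm ((e \<circ> Phi) (k y) - y) < 1" if "y \<in> sphere 0 1" for y
          using d(2) cl[OF that] eg[OF that] that by (force simp: dist_norm)
      qed
    qed
  qed
qed



lemma nonincr_within:
  fixes \<phi> \<phi>' :: "real \<Rightarrow> real"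
  assumes ab: "0 \<le> a" "a \<le> b"
    and d: "\<And>x. x \<in> {a..b} \<Longrightarrow> (\<phi> has_real_derivative \<phi>' x) (at x within {0..})"
    and n: "\<And>x. x \<in> {a..b} \<Longrightarrow> \<phi>' x \<le> 0"
  shows "\<phi> b \<le> \<phi> a"
proof (rule DERIV_nonpos_imp_decreasing_open[OF ab(2)])
  fix x assume x: "a < x" "x < b"
  then have "x \<in> interior {0..}" using ab by simp
  then have "at x within {0..} = at x" by (rule at_within_interior)
  then show "\<exists>y. DERIV \<phi> x :> y \<and> y \<le> 0"
    using d[of x] n[of x] x by auto
next
  show "continuous_on {a..b} \<phi>"
    unfolding continuous_on_eq_continuous_within
  proof
    fix x assume x: "x \<in> {a..b}"
    have "continuous (at x within {0..}) \<phi>"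
      using DERIV_continuous[OF d[OF x]] .
    then show "continuous (at x within {a..b}) \<phi>"
      by (rule continuous_within_subset) (use ab in auto)
  qed
qed

lemma gronwall:
  fixes z z' :: "real \<Rightarrow> real"
  assumes a: "a > 0" and t: "0 \<le> t" "t \<le> T"
    and d: "\<And>s. s \<in> {0..T} \<Longrightarrow> (z has_real_derivative z' s) (at s within {0..})"
    and le: "\<And>s. s \<in> {0..T} \<Longrightarrow> z' s \<le> a * z s + b"
  shows "z t + b / a \<le> (z 0 + b / a) * exp (a * t)"
proof -
  define \<psi> where "\<psi> = (\<lambda>s. (z s + b / a) * exp (- a * s))"
  have "\<psi> t \<le> \<psi> 0"
  proof (rule nonincr_within[OF order_refl t(1)])
    fix s assume s: "s \<in> {0..t}"
    then have sT: "s \<in> {0..T}" using t by auto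
    show "(\<psi> has_real_derivative (z' s - a * z s - b) * exp (- a * s)) (at s within {0..})"
      unfolding \<psi>_def
      by (rule derivative_eq_intros d[OF sT] refl | simp)+ (use a in \<open>simp add: field_simps\<close>)
    show "(z' s - a * z s - b) * exp (- a * s) \<le> 0"
      using le[OF sT] by (simp add: mult_nonpos_nonneg)
  qed
  then have "(z t + b / a) * exp (- a * t) \<le> z 0 + b / a" by (simp add: \<psi>_def)
  then have B: "(z t + b / a) * exp (- a * t) * exp (a * t) \<le> (z 0 + b / a) * exp (a * t)"
    by (simp add: mult_right_mono)
  have C: "(z t + b / a) * exp (- a * t) * exp (a * t) = z t + b / a"
    by (simp add: mult.assoc flip: exp_add)
  show ?thesis using B unfolding C .
qed

locale gfsetup =
  fixes Phi :: "'w::euclidean_space \<Rightarrow> 'h::{real_inner, complete_space}"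
    and Phi' :: "'w \<Rightarrow> ('w \<Rightarrow>\<^sub>L 'h)"
    and L :: real
  assumes deriv: "\<And>x. (Phi has_derivative blinfun_apply (Phi' x)) (at x)"
    and lip: "lipschitz_on L UNIV Phi'"
begin

definition V :: "'h \<Rightarrow> 'w \<Rightarrow> 'w" where
  "V f w = (\<Sum>b\<in>Basis. inner (f - Phi w) (Phi' w b) *\<^sub>R b)"

lemma loss_deriv:
  "(loss Phi f has_derivative (\<lambda>h. - inner (f - Phi w) (Phi' w h))) (at w)"
proof -
  have eq: "loss Phi f = (\<lambda>w. (1/2) * inner (f - Phi w) (f - Phi w))"
    by (auto simp: loss_def power2_norm_eq_inner)
  have d0: "((\<lambda>w. f - Phi w) has_derivative (\<lambda>h. - Phi' w h)) (at w)"
    using has_derivative_diff[OF has_derivative_const[of f] deriv[of w]] by simp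
  have d1: "((\<lambda>w. inner (f - Phi w) (f - Phi w)) has_derivative
      (\<lambda>h. inner (f - Phi w) (- Phi' w h) + inner (- Phi' w h) (f - Phi w))) (at w)"
    by (rule has_derivative_inner[OF d0 d0])
  have d2: "((\<lambda>w. (1/2) * inner (f - Phi w) (f - Phi w)) has_derivative
      (\<lambda>h. (1/2) * (inner (f - Phi w) (- Phi' w h) + inner (- Phi' w h) (f - Phi w)))) (at w)"
    by (rule has_derivative_mult_right[OF d1])
  have e: "(\<lambda>h. (1/2) * (inner (f - Phi w) (- Phi' w h) + inner (- Phi' w h) (f - Phi w)))
       = (\<lambda>h. - inner (f - Phi w) (Phi' w h))"
    by (auto simp: fun_eq_iff inner_commute)
  show ?thesis unfolding eq by (rule has_derivative_eq_rhs[OF d2 e])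
qed

lemma grad_eq:
  assumes "(loss Phi f has_derivative (\<lambda>h. gr \<bullet> h)) (at w)"
  shows "gr = - V f w"
proof -
  have "(\<lambda>h. gr \<bullet> h) = (\<lambda>h. - inner (f - Phi w) (Phi' w h))"
    using has_derivative_unique[OF assms loss_deriv] .
  then have c: "gr \<bullet> b = - inner (f - Phi w) (Phi' w b)" for b
    using fun_cong[of "\<lambda>h. gr \<bullet> h" _ b] by simp
  have "gr = (\<Sum>b\<in>Basis. (gr \<bullet> b) *\<^sub>R b)" by (simp add: euclidean_representation)
  also have "\<dots> = (\<Sum>b\<in>Basis. - (inner (f - Phi w) (Phi' w b) *\<^sub>R b))"
    by (rule sum.cong) (simp_all add: c)
  also have "\<dots> = - V f w" unfolding V_def by (rule sum_negf)
  finally show ?thesis .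
qed

lemma sol_deriv:
  assumes "is_GF_solution Phi f w" "t \<ge> 0"
  shows "(w has_vector_derivative V f (w t)) (at t within {0..})"
proof -
  obtain gr where g1: "(loss Phi f has_derivative (\<lambda>h. gr \<bullet> h)) (at (w t))"
    and g2: "(w has_vector_derivative (- gr)) (at t within {0..})"
    using assms unfolding is_GF_solution_def by blast
  have "- gr = V f (w t)" using grad_eq[OF g1] by simp
  then show ?thesis using g2 by simp
qed

lemma sol_loss_deriv:
  assumes "is_GF_solution Phi f w" "t \<ge> 0"
  shows "((\<lambda>t. loss Phi f (w t)) has_real_derivative (- inner (f - Phi (w t)) (Phi' (w t) (V f (w t))))) (at t within {0..})"
proof -
  have d1: "(w has_derivative (\<lambda>s. s *\<^sub>R V f (w t))) (at t within {0..})"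
    using sol_deriv[OF assms] by (simp add: has_vector_derivative_def)
  have d2: "(loss Phi f has_derivative (\<lambda>h. - inner (f - Phi (w t)) (Phi' (w t) h))) (at (w t) within w ` {0..})"
    using loss_deriv has_derivative_at_withinI by blast
  have A: "((\<lambda>t. loss Phi f (w t)) has_derivative (\<lambda>s. - inner (f - Phi (w t)) (Phi' (w t) (s *\<^sub>R V f (w t))))) (at t within {0..})"
    using diff_chain_within[OF d1 d2] by (simp add: o_def)
  have eq: "(\<lambda>s. - inner (f - Phi (w t)) (Phi' (w t) (s *\<^sub>R V f (w t)))) = (*) (- inner (f - Phi (w t)) (Phi' (w t) (V f (w t))))"
    by (auto simp: blinfun.scaleR_right fun_eq_iff)
  show ?thesis unfolding has_field_derivative_def by (rule has_derivative_eq_rhs[OF A eq])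
qed

lemma V_coord: "b \<in> Basis \<Longrightarrow> V f x \<bullet> b = inner (f - Phi x) (Phi' x b)"
  unfolding V_def by (simp add: inner_sum_left inner_Basis if_distrib[of "\<lambda>u. _ * u"] sum.delta' cong: if_cong)

lemma V_inner: "inner (f - Phi x) (Phi' x (V f x)) = (norm (V f x))\<^sup>2"
proof -
  have "inner (f - Phi x) (Phi' x (V f x)) = (\<Sum>b\<in>Basis. inner (f - Phi x) (Phi' x b) * (V f x \<bullet> b))"
  proof -
    have "Phi' x (V f x) = Phi' x (\<Sum>b\<in>Basis. (V f x \<bullet> b) *\<^sub>R b)"
      by (simp add: euclidean_representation)
    also have "\<dots> = (\<Sum>b\<in>Basis. (V f x \<bullet> b) *\<^sub>R Phi' x b)"
      by (simp add: blinfun.sum_right blinfun.scaleR_right)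
    finally show ?thesis by (simp add: inner_sum_right mult.commute)
  qed
  also have "\<dots> = (\<Sum>b\<in>Basis. (V f x \<bullet> b) * (V f x \<bullet> b))"
    by (rule sum.cong) (simp_all add: V_coord)
  also have "\<dots> = (norm (V f x))\<^sup>2"
    by (simp add: power2_norm_eq_inner euclidean_inner[of "V f x" "V f x"])
  finally show ?thesis .
qed

lemma loss_mono:
  assumes "is_GF_solution Phi f w" "0 \<le> s" "s \<le> t"
  shows "loss Phi f (w t) \<le> loss Phi f (w s)"
proof (rule nonincr_within[OF assms(2,3)])
  fix x assume "x \<in> {s..t}"
  then have x: "x \<ge> 0" using assms by auto
  show "((\<lambda>t. loss Phi f (w t)) has_real_derivative (- (norm (V f (w x)))\<^sup>2)) (at x within {0..})"
    using sol_loss_deriv[OF assms(1) x] unfolding V_inner .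
qed simp

lemma norm_mono:
  assumes "is_GF_solution Phi f w" "0 \<le> s" "s \<le> t"
  shows "norm (f - Phi (w t)) \<le> norm (f - Phi (w s))"
proof (rule power2_le_imp_le)
  show "(norm (f - Phi (w t)))\<^sup>2 \<le> (norm (f - Phi (w s)))\<^sup>2"
    using loss_mono[OF assms] unfolding loss_def by simp
qed simp


lemma normD: "norm (Phi' x) \<le> norm (Phi' 0) + L * norm x"
proof -
  have "dist (Phi' x) (Phi' 0) \<le> L * dist x 0" using lipschitz_onD[OF lip] by blast
  then have "norm (Phi' x - Phi' 0) \<le> L * norm x" by (simp add: dist_norm)
  then show ?thesis using norm_triangle_ineq2[of "Phi' x" "Phi' 0"] by linarith
qed

lemma L_nonneg: "0 \<le> L" using lipschitz_on_nonneg[OF lip] .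

lemma V_bound: "norm (V f x) \<le> real DIM('w) * (norm (f - Phi x) * norm (Phi' x))"
proof -
  have "norm (V f x) \<le> (\<Sum>b\<in>Basis. norm (inner (f - Phi x) (Phi' x b) *\<^sub>R b))"
    unfolding V_def by (rule norm_sum)
  also have "\<dots> \<le> real (card (Basis::'w set)) * (norm (f - Phi x) * norm (Phi' x))"
  proof (rule sum_bounded_above)
    fix b :: 'w assume b: "b \<in> Basis"
    have "norm (inner (f - Phi x) (Phi' x b) *\<^sub>R b) = \<bar>inner (f - Phi x) (Phi' x b)\<bar>"
      using b by simp
    also have "\<dots> \<le> norm (f - Phi x) * norm (Phi' x b)" by (rule Cauchy_Schwarz_ineq2)
    also have "\<dots> \<le> norm (f - Phi x) * norm (Phi' x)"
      using norm_blinfun[of "Phi' x" b] b by (simp add: mult_left_mono)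
    finally show "norm (inner (f - Phi x) (Phi' x b) *\<^sub>R b) \<le> norm (f - Phi x) * norm (Phi' x)" .
  qed
  finally show ?thesis by simp
qed

lemma sq_deriv:
  fixes u :: "real \<Rightarrow> 'a::real_inner"
  assumes "(u has_vector_derivative u') (at t within S)"
  shows "((\<lambda>t. (norm (u t))\<^sup>2) has_real_derivative 2 * inner (u t) u') (at t within S)"
proof -
  have d: "(u has_derivative (\<lambda>s. s *\<^sub>R u')) (at t within S)"
    using assms by (simp add: has_vector_derivative_def)
  have "((\<lambda>t. inner (u t) (u t)) has_derivative (\<lambda>s. inner (u t) (s *\<^sub>R u') + inner (s *\<^sub>R u') (u t))) (at t within S)"
    by (rule has_derivative_inner[OF d d])
  moreover have "(\<lambda>s. inner (u t) (s *\<^sub>R u') + inner (s *\<^sub>R u') (u t)) = (*) (2 * inner (u t) u')"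
    by (auto simp: fun_eq_iff inner_commute algebra_simps)
  ultimately have "((\<lambda>t. inner (u t) (u t)) has_derivative (*) (2 * inner (u t) u')) (at t within S)"
    by (rule has_derivative_eq_rhs)
  moreover have "(\<lambda>t. (norm (u t))\<^sup>2) = (\<lambda>t. inner (u t) (u t))"
    by (rule ext) (rule power2_norm_eq_inner)
  ultimately show ?thesis unfolding has_field_derivative_def by simp
qed

lemma traj_bound:
  assumes T: "0 \<le> T"
  shows "\<exists>R\<ge>0. \<forall>f w t. norm f \<le> M \<longrightarrow> is_GF_solution Phi f w \<longrightarrow> t \<in> {0..T} \<longrightarrow> norm (w t) \<le> R"
proof -
  define c where "c = max 0 (M + norm (Phi 0))"
  define A where "A = real DIM('w) * c * norm (Phi' 0)"
  define B where "B = real DIM('w) * c * L"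
  define a where "a = A + 2 * B + 1"
  have A0: "A \<ge> 0" and B0: "B \<ge> 0" using L_nonneg by (auto simp: A_def B_def c_def)
  have a0: "a > 0" using A0 B0 by (simp add: a_def)
  define R where "R = sqrt ((A / a) * exp (a * T))"
  have "norm (w t) \<le> R" if f: "norm f \<le> M" and sol: "is_GF_solution Phi f w" and t: "t \<in> {0..T}" for f w t
  proof -
    have w0: "w 0 = 0" using sol by (simp add: is_GF_solution_def)
    define z where "z = (\<lambda>t. (norm (w t))\<^sup>2)"
    have dz: "(z has_real_derivative 2 * inner (w s) (V f (w s))) (at s within {0..})" if "s \<in> {0..T}" for s
      unfolding z_def by (rule sq_deriv[OF sol_deriv[OF sol]]) (use that in auto)
    have le: "2 * inner (w s) (V f (w s)) \<le> a * z s + A" if s: "s \<in> {0..T}" for s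
    proof -
      have n1: "norm (f - Phi (w s)) \<le> c"
      proof -
        have "norm (f - Phi (w s)) \<le> norm (f - Phi (w 0))"
          by (rule norm_mono[OF sol]) (use s in auto)
        also have "\<dots> \<le> norm f + norm (Phi 0)" using w0 norm_triangle_ineq4 by simp
        finally show ?thesis using f by (simp add: c_def)
      qed
      have c0: "c \<ge> 0" by (simp add: c_def)
      have "norm (V f (w s)) \<le> real DIM('w) * (c * (norm (Phi' 0) + L * norm (w s)))"
      proof -
        have "norm (f - Phi (w s)) * norm (Phi' (w s)) \<le> c * (norm (Phi' 0) + L * norm (w s))"
          by (rule mult_mono[OF n1 normD]) (use c0 in auto)
        then have "real DIM('w) * (norm (f - Phi (w s)) * norm (Phi' (w s))) \<le> real DIM('w) * (c * (norm (Phi' 0) + L * norm (w s)))"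
          by (rule mult_left_mono) simp
        then show ?thesis using V_bound[of f "w s"] by linarith
      qed
      then have nV: "norm (V f (w s)) \<le> A + B * norm (w s)"
        by (simp add: A_def B_def algebra_simps)
      have "2 * inner (w s) (V f (w s)) \<le> 2 * (norm (w s) * norm (V f (w s)))"
        using norm_cauchy_schwarz[of "w s" "V f (w s)"] by simp
      also have "\<dots> \<le> 2 * (norm (w s) * (A + B * norm (w s)))"
        using nV by (simp add: mult_left_mono)
      also have "\<dots> = 2 * A * norm (w s) + 2 * B * (norm (w s))\<^sup>2"
        by (simp add: algebra_simps power2_eq_square)
      also have "\<dots> \<le> A * ((norm (w s))\<^sup>2 + 1) + 2 * B * (norm (w s))\<^sup>2"
      proof -
        have "2 * norm (w s) \<le> (norm (w s))\<^sup>2 + 1"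
          using sum_squares_bound[of "norm (w s)" 1] by (simp add: power2_eq_square)
        then have "A * (2 * norm (w s)) \<le> A * ((norm (w s))\<^sup>2 + 1)"
          using A0 by (rule mult_left_mono)
        then show ?thesis by (simp add: algebra_simps)
      qed
      also have "\<dots> \<le> a * z s + A"
        using A0 B0 by (simp add: a_def z_def algebra_simps)
      finally show ?thesis .
    qed
    have "z t + A / a \<le> (z 0 + A / a) * exp (a * t)"
      by (rule gronwall[OF a0 _ _ dz le]) (use t in auto)
    moreover have "A / a \<ge> 0" using A0 a0 by simp
    ultimately have "z t \<le> (A / a) * exp (a * t)"
      using w0 by (simp add: z_def)
    also have "\<dots> \<le> (A / a) * exp (a * T)"
      using t a0 A0 by (intro mult_left_mono) auto
    finally have "(norm (w t))\<^sup>2 \<le> (A / a) * exp (a * T)" by (simp add: z_def)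
    then show ?thesis unfolding R_def by (rule real_le_rsqrt)
  qed
  moreover have "R \<ge> 0" unfolding R_def using A0 a0 by simp
  ultimately show ?thesis by blast
qed


definition Dm :: "real \<Rightarrow> real" where "Dm R = norm (Phi' 0) + L * R"
definition Pm :: "real \<Rightarrow> real" where "Pm R = norm (Phi 0) + Dm R * R"
definition KK :: "real \<Rightarrow> real \<Rightarrow> real" where
  "KK R M = real DIM('w) * (Dm R * Dm R + Dm R + (M + Pm R) * L) + 1"

lemma Dm_bound: "norm x \<le> R \<Longrightarrow> norm (Phi' x) \<le> Dm R"
  using normD[of x] L_nonneg unfolding Dm_def by (smt (verit) mult_left_mono)

lemma Phi_lip:
  assumes "norm x \<le> R" "norm y \<le> R"
  shows "norm (Phi x - Phi y) \<le> Dm R * norm (x - y)"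
proof (rule differentiable_bound[of "cball 0 R"])
  show "convex (cball (0::'w) R)" by simp
  show "(Phi has_derivative blinfun_apply (Phi' z)) (at z within cball 0 R)" for z
    using deriv has_derivative_at_withinI by blast
  show "onorm (blinfun_apply (Phi' z)) \<le> Dm R" if "z \<in> cball 0 R" for z
    using Dm_bound[of z R] that by (simp add: norm_blinfun.rep_eq[symmetric])
qed (use assms in auto)

lemma Phi_bound:
  assumes "norm x \<le> R"
  shows "norm (Phi x) \<le> Pm R"
proof -
  have R: "0 \<le> R" using assms norm_ge_zero order_trans by blast
  have "norm (Phi x - Phi 0) \<le> Dm R * norm (x - 0)"
    by (rule Phi_lip) (use assms R in auto)
  also have "\<dots> \<le> Dm R * R"
  proof (rule mult_left_mono)
    show "norm (x - 0) \<le> R" using assms by simp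
    show "0 \<le> Dm R" unfolding Dm_def
      by (rule add_nonneg_nonneg[OF norm_ge_zero mult_nonneg_nonneg[OF L_nonneg R]])
  qed
  finally show ?thesis unfolding Pm_def using norm_triangle_ineq2[of "Phi x" "Phi 0"] by linarith
qed

lemma V_lip:
  assumes x: "norm x \<le> R" and y: "norm y \<le> R" and f': "norm f' \<le> M"
  shows "norm (V f x - V f' y) \<le> KK R M * (norm (f - f') + norm (x - y))"
proof -
  have R: "0 \<le> R" using x norm_ge_zero order_trans by blast
  have D0: "0 \<le> Dm R" using Dm_bound[OF x] norm_ge_zero order_trans by blast
  have MP: "0 \<le> M + Pm R" using f' Phi_bound[OF y] norm_ge_zero[of f'] norm_ge_zero[of "Phi y"] by linarith
  define \<delta> where "\<delta> = norm (f - f') + norm (x - y)"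
  define k where "k = Dm R * Dm R + Dm R + (M + Pm R) * L"
  have k0: "0 \<le> k" unfolding k_def using D0 MP L_nonneg by simp
  have eqV: "V f x - V f' y = (\<Sum>b\<in>Basis. (inner (f - Phi x) (Phi' x b) - inner (f' - Phi y) (Phi' y b)) *\<^sub>R b)"
    unfolding V_def by (simp add: sum_subtractf scaleR_diff_left)
  have "norm (V f x - V f' y) \<le> (\<Sum>b\<in>Basis. norm ((inner (f - Phi x) (Phi' x b) - inner (f' - Phi y) (Phi' y b)) *\<^sub>R b))"
    unfolding eqV by (rule norm_sum)
  also have "\<dots> \<le> real (card (Basis::'w set)) * (k * \<delta>)"
  proof (rule sum_bounded_above)
    fix b :: 'w assume b: "b \<in> Basis"
    have nb: "norm b = 1" using b by simp
    have split: "inner (f - Phi x) (Phi' x b) - inner (f' - Phi y) (Phi' y b)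
       = inner ((f - f') - (Phi x - Phi y)) (Phi' x b) + inner (f' - Phi y) (Phi' x b - Phi' y b)"
      by (simp add: inner_diff_left inner_diff_right)
    have t1: "\<bar>inner ((f - f') - (Phi x - Phi y)) (Phi' x b)\<bar> \<le> (norm (f - f') + Dm R * norm (x - y)) * Dm R"
    proof -
      have "\<bar>inner ((f - f') - (Phi x - Phi y)) (Phi' x b)\<bar> \<le> norm ((f - f') - (Phi x - Phi y)) * norm (Phi' x b)"
        by (rule Cauchy_Schwarz_ineq2)
      also have "\<dots> \<le> (norm (f - f') + Dm R * norm (x - y)) * Dm R"
      proof (rule mult_mono)
        show "norm ((f - f') - (Phi x - Phi y)) \<le> norm (f - f') + Dm R * norm (x - y)"
          using norm_triangle_ineq4[of "f - f'" "Phi x - Phi y"] Phi_lip[OF x y] by linarith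
        show "norm (Phi' x b) \<le> Dm R"
          using norm_blinfun[of "Phi' x" b] nb Dm_bound[OF x] by simp
      qed (use D0 in auto)
      finally show ?thesis .
    qed
    have t2: "\<bar>inner (f' - Phi y) (Phi' x b - Phi' y b)\<bar> \<le> (M + Pm R) * (L * norm (x - y))"
    proof -
      have "\<bar>inner (f' - Phi y) (Phi' x b - Phi' y b)\<bar> \<le> norm (f' - Phi y) * norm (Phi' x b - Phi' y b)"
        by (rule Cauchy_Schwarz_ineq2)
      also have "\<dots> \<le> (M + Pm R) * (L * norm (x - y))"
      proof (rule mult_mono)
        show "norm (f' - Phi y) \<le> M + Pm R"
          using norm_triangle_ineq4[of f' "Phi y"] f' Phi_bound[OF y] by linarith
        have "norm (Phi' x b - Phi' y b) = norm ((Phi' x - Phi' y) b)" by (simp add: blinfun.diff_left)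
        also have "\<dots> \<le> norm (Phi' x - Phi' y)" using norm_blinfun[of "Phi' x - Phi' y" b] nb by simp
        also have "\<dots> \<le> L * norm (x - y)"
          using lipschitz_onD[OF lip, of x y] by (simp add: dist_norm)
        finally show "norm (Phi' x b - Phi' y b) \<le> L * norm (x - y)" .
      qed (use MP in auto)
      finally show ?thesis .
    qed
    have "norm ((inner (f - Phi x) (Phi' x b) - inner (f' - Phi y) (Phi' y b)) *\<^sub>R b)
        = \<bar>inner ((f - f') - (Phi x - Phi y)) (Phi' x b) + inner (f' - Phi y) (Phi' x b - Phi' y b)\<bar>"
      using nb split by simp
    also have "\<dots> \<le> (norm (f - f') + Dm R * norm (x - y)) * Dm R + (M + Pm R) * (L * norm (x - y))"
      using t1 t2 abs_triangle_ineq by (smt (verit))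
    also have "\<dots> = Dm R * norm (f - f') + (Dm R * Dm R + (M + Pm R) * L) * norm (x - y)"
      by (simp add: algebra_simps)
    also have "\<dots> \<le> k * \<delta>"
    proof -
      have "Dm R * norm (f - f') \<le> k * norm (f - f')"
        by (rule mult_right_mono) (use D0 MP L_nonneg in \<open>auto simp: k_def\<close>)
      moreover have "(Dm R * Dm R + (M + Pm R) * L) * norm (x - y) \<le> k * norm (x - y)"
        by (rule mult_right_mono) (use D0 in \<open>auto simp: k_def\<close>)
      ultimately show ?thesis by (simp add: \<delta>_def distrib_left)
    qed
    finally show "norm ((inner (f - Phi x) (Phi' x b) - inner (f' - Phi y) (Phi' y b)) *\<^sub>R b) \<le> k * \<delta>" .
  qed
  also have "\<dots> \<le> KK R M * \<delta>"
  proof -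
    have d0: "0 \<le> \<delta>" by (simp add: \<delta>_def)
    have "real DIM('w) * (k * \<delta>) = (real DIM('w) * k) * \<delta>" by simp
    also have "\<dots> \<le> KK R M * \<delta>"
      by (rule mult_right_mono) (use d0 in \<open>simp_all add: KK_def k_def\<close>)
    finally show ?thesis by simp
  qed
  finally show ?thesis by (simp add: \<delta>_def)
qed

lemma KK_pos: "0 \<le> R \<Longrightarrow> 0 \<le> M + Pm R \<Longrightarrow> 0 < KK R M"
proof -
  assume R: "0 \<le> R" and MP: "0 \<le> M + Pm R"
  have D0: "0 \<le> Dm R" unfolding Dm_def using R L_nonneg by simp
  have "0 \<le> real DIM('w) * (Dm R * Dm R + Dm R + (M + Pm R) * L)"
    using D0 MP L_nonneg by simp
  then show ?thesis unfolding KK_def by simp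
qed


lemma cont_dep:
  assumes T: "0 \<le> T"
  shows "\<exists>C. \<forall>f f' u v t. norm f \<le> M \<longrightarrow> norm f' \<le> M \<longrightarrow> is_GF_solution Phi f u \<longrightarrow>
           is_GF_solution Phi f' v \<longrightarrow> t \<in> {0..T} \<longrightarrow> norm (u t - v t) \<le> C * norm (f - f')"
proof -
  obtain R where R0: "R \<ge> 0" and Rb: "\<And>f w t. norm f \<le> M \<Longrightarrow> is_GF_solution Phi f w \<Longrightarrow> t \<in> {0..T} \<Longrightarrow> norm (w t) \<le> R"
    using traj_bound[OF T, of M] by blast
  define M' where "M' = max M (- Pm R)"
  have MP: "0 \<le> M' + Pm R" by (simp add: M'_def)
  define K where "K = KK R M'"
  have K0: "K > 0" unfolding K_def by (rule KK_pos[OF R0 MP])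
  define C where "C = sqrt (exp (3 * K * T))"
  have "norm (u t - v t) \<le> C * norm (f - f')"
    if f: "norm f \<le> M" and f': "norm f' \<le> M" and su: "is_GF_solution Phi f u"
      and sv: "is_GF_solution Phi f' v" and t: "t \<in> {0..T}" for f f' u v t
  proof -
    define \<delta> where "\<delta> = norm (f - f')"
    define z where "z = (\<lambda>t. (norm (u t - v t))\<^sup>2)"
    have dz: "(z has_real_derivative 2 * inner (u s - v s) (V f (u s) - V f' (v s))) (at s within {0..})"
      if "s \<in> {0..T}" for s
      unfolding z_def
      by (rule sq_deriv[OF has_vector_derivative_diff[OF sol_deriv[OF su] sol_deriv[OF sv]]]) (use that in auto)
    have le: "2 * inner (u s - v s) (V f (u s) - V f' (v s)) \<le> (3 * K) * z s + K * \<delta>\<^sup>2"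
      if s: "s \<in> {0..T}" for s
    proof -
      define n where "n = norm (u s - v s)"
      have n0: "0 \<le> n" by (simp add: n_def)
      have f'': "norm f' \<le> M'" using f' by (simp add: M'_def)
      have lipV: "norm (V f (u s) - V f' (v s)) \<le> K * (\<delta> + n)"
        unfolding K_def \<delta>_def n_def
        by (rule V_lip[OF Rb[OF f su s] Rb[OF f' sv s] f''])
      have "2 * inner (u s - v s) (V f (u s) - V f' (v s)) \<le> 2 * (n * norm (V f (u s) - V f' (v s)))"
        using norm_cauchy_schwarz[of "u s - v s" "V f (u s) - V f' (v s)"] by (simp add: n_def)
      also have "\<dots> \<le> 2 * (n * (K * (\<delta> + n)))"
        using lipV n0 by (simp add: mult_left_mono)
      also have "\<dots> = K * (2 * \<delta> * n) + 2 * K * n\<^sup>2"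
        by (simp add: algebra_simps power2_eq_square)
      also have "\<dots> \<le> K * (\<delta>\<^sup>2 + n\<^sup>2) + 2 * K * n\<^sup>2"
      proof -
        have "2 * \<delta> * n \<le> \<delta>\<^sup>2 + n\<^sup>2" using sum_squares_bound[of \<delta> n] by (simp add: power2_eq_square)
        then have "K * (2 * \<delta> * n) \<le> K * (\<delta>\<^sup>2 + n\<^sup>2)" using K0 by (intro mult_left_mono) auto
        then show ?thesis by linarith
      qed
      also have "\<dots> = (3 * K) * z s + K * \<delta>\<^sup>2"
        by (simp add: z_def n_def algebra_simps)
      finally show ?thesis .
    qed
    have a0: "3 * K > 0" using K0 by simp
    have "z t + K * \<delta>\<^sup>2 / (3 * K) \<le> (z 0 + K * \<delta>\<^sup>2 / (3 * K)) * exp ((3 * K) * t)"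
      by (rule gronwall[OF a0 _ _ dz le]) (use t in auto)
    moreover have "z 0 = 0"
      using su sv by (simp add: z_def is_GF_solution_def)
    moreover have "K * \<delta>\<^sup>2 / (3 * K) = \<delta>\<^sup>2 / 3" using K0 by simp
    ultimately have "z t + \<delta>\<^sup>2 / 3 \<le> \<delta>\<^sup>2 / 3 * exp (3 * K * t)" by simp
    then have "z t \<le> \<delta>\<^sup>2 / 3 * exp (3 * K * t)" by (smt (verit) zero_le_power2 divide_nonneg_pos)
    also have "\<dots> \<le> \<delta>\<^sup>2 * exp (3 * K * T)"
    proof (rule mult_mono)
      show "\<delta>\<^sup>2 / 3 \<le> \<delta>\<^sup>2" by simp
      show "exp (3 * K * t) \<le> exp (3 * K * T)" using t K0 by simp
    qed auto
    finally have "(norm (u t - v t))\<^sup>2 \<le> (\<delta> * C)\<^sup>2"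
      by (simp add: z_def C_def power_mult_distrib)
    then have "norm (u t - v t) \<le> \<delta> * C"
      by (rule power2_le_imp_le) (simp add: \<delta>_def C_def)
    then show ?thesis by (simp add: \<delta>_def mult.commute)
  qed
  then show ?thesis by blast
qed

end




theorem theorem3:
  fixes Phi :: "'w::euclidean_space \<Rightarrow> 'h::{real_inner, complete_space}"
    and Phi' :: "'w \<Rightarrow> ('w \<Rightarrow>\<^sub>L 'h)"
    and g :: "'w \<times> real \<Rightarrow> 'h"
    and L :: real
  assumes deriv: "\<And>x. (Phi has_derivative blinfun_apply (Phi' x)) (at x)"
    and lip: "lipschitz_on L UNIV Phi'"
    and cont: "continuous_on (sphere 0 1) g"
    and inj: "inj_on g (sphere 0 1)"
  shows "\<not> (g ` sphere 0 1 \<subseteq> F_learnable Phi)"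
proof
  assume H: "g ` sphere 0 1 \<subseteq> F_learnable Phi"
  interpret gfsetup Phi Phi' L by unfold_locales (rule deriv, rule lip)
  define S where "S = sphere (0::'w \<times> real) 1"
  define P where "P = (\<lambda>y w. is_GF_solution Phi (g y) w \<and> (INF t\<in>{0..}. loss Phi (g y) (w t)) = 0)"
  define sol where "sol = (\<lambda>y. SOME w. P y w)"
  have solP: "P y (sol y)" if "y \<in> S" for y
  proof -
    have "g y \<in> F_learnable Phi" using H that unfolding S_def by blast
    then have "\<exists>w. P y w" unfolding P_def F_learnable_def by blast
    then show ?thesis unfolding sol_def by (rule someI_ex)
  qed
  have sol: "is_GF_solution Phi (g y) (sol y)" if "y \<in> S" for y
    using solP[OF that] by (simp add: P_def)
  have solinf: "(INF t\<in>{0..}. loss Phi (g y) (sol y t)) = 0" if "y \<in> S" for y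
    using solP[OF that] by (simp add: P_def)
  have compS: "compact S" by (simp add: S_def)
  have contg: "continuous_on S g" using cont by (simp add: S_def)
  have "bounded (g ` S)" by (rule compact_imp_bounded[OF compact_continuous_image[OF contg compS]])
  then obtain M where M: "\<And>y. y \<in> S \<Longrightarrow> norm (g y) \<le> M"
    by (auto simp: bounded_iff)
  have contPhi: "continuous_on UNIV Phi"
    by (rule continuous_at_imp_continuous_on) (use has_derivative_continuous[OF deriv] in auto)
  have kcont: "continuous_on S (\<lambda>y. sol y T)" if T: "0 \<le> T" for T
  proof -
    obtain C where C: "\<And>f f' u v t. norm f \<le> M \<Longrightarrow> norm f' \<le> M \<Longrightarrow> is_GF_solution Phi f u \<Longrightarrow>
           is_GF_solution Phi f' v \<Longrightarrow> t \<in> {0..T} \<Longrightarrow> norm (u t - v t) \<le> C * norm (f - f')"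
      using cont_dep[OF T, of M] by blast
    have Ck: "dist (sol y T) (sol y' T) \<le> \<bar>C\<bar> * dist (g y) (g y')" if "y \<in> S" "y' \<in> S" for y y'
    proof -
      have "norm (sol y T - sol y' T) \<le> C * norm (g y - g y')"
        by (rule C[OF M M sol sol]) (use that T in auto)
      also have "\<dots> \<le> \<bar>C\<bar> * norm (g y - g y')" by (simp add: mult_right_mono)
      finally show ?thesis by (simp add: dist_norm)
    qed
    show ?thesis unfolding continuous_on_iff
    proof (intro ballI allI impI)
      fix x e assume x: "x \<in> S" and e: "(0::real) < e"
      have e': "e / (\<bar>C\<bar> + 1) > 0" using e by simp
      from contg x e' obtain d where d0: "d > 0" and
        d1: "\<forall>x'\<in>S. dist x' x < d \<longrightarrow> dist (g x') (g x) < e / (\<bar>C\<bar> + 1)"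
        unfolding continuous_on_iff by blast
      have d: "d > 0" "\<And>x'. x' \<in> S \<Longrightarrow> dist x' x < d \<Longrightarrow> dist (g x') (g x) < e / (\<bar>C\<bar> + 1)"
        using d0 d1 by auto
      show "\<exists>d>0. \<forall>x'\<in>S. dist x' x < d \<longrightarrow> dist (sol x' T) (sol x T) < e"
      proof (intro exI conjI ballI impI)
        fix x' assume x': "x' \<in> S" "dist x' x < d"
        have "dist (sol x' T) (sol x T) \<le> \<bar>C\<bar> * dist (g x') (g x)" by (rule Ck[OF x'(1) x])
        also have "\<dots> \<le> \<bar>C\<bar> * (e / (\<bar>C\<bar> + 1))"
          using d(2)[OF x'] by (intro mult_left_mono) auto
        also have "\<dots> < e"
        proof -
          have "\<bar>C\<bar> * (e / (\<bar>C\<bar> + 1)) = e * (\<bar>C\<bar> / (\<bar>C\<bar> + 1))" by simp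
          also have "\<dots> < e * 1" using e by (intro mult_strict_left_mono) auto
          finally show ?thesis by simp
        qed
        finally show "dist (sol x' T) (sol x T) < e" .
      qed (use d in auto)
    qed
  qed
  have unif: "\<exists>T\<ge>0. \<forall>y\<in>S. dist (Phi (sol y T)) (g y) < \<epsilon>" if e: "\<epsilon> > 0" for \<epsilon>
  proof -
    have loc: "\<exists>t0 d. t0 \<ge> 0 \<and> d > 0 \<and> (\<forall>y\<in>S. dist y y0 < d \<longrightarrow> dist (Phi (sol y t0)) (g y) < \<epsilon>)"
      if y0: "y0 \<in> S" for y0
    proof -
      have lt: "(INF t\<in>{0..}. loss Phi (g y0) (sol y0 t)) < (\<epsilon>/2)\<^sup>2 / 2"
        using solinf[OF y0] e by simp
      have bdd: "bdd_below ((\<lambda>t. loss Phi (g y0) (sol y0 t)) ` {0..})"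
        by (rule bdd_belowI[of _ 0]) (auto simp: loss_def)
      have ne: "{0::real..} \<noteq> {}" by auto
      have "\<exists>t\<in>{0..}. loss Phi (g y0) (sol y0 t) < (\<epsilon>/2)\<^sup>2 / 2"
        using iffD1[OF cINF_less_iff[OF ne bdd] lt] .
      then obtain t0 where t0: "t0 \<ge> 0" "loss Phi (g y0) (sol y0 t0) < (\<epsilon>/2)\<^sup>2 / 2"
        by auto
      then have "(norm (g y0 - Phi (sol y0 t0)))\<^sup>2 < (\<epsilon>/2)\<^sup>2" by (simp add: loss_def)
      then have "norm (g y0 - Phi (sol y0 t0)) < \<epsilon>/2"
        by (rule power2_less_imp_less) (use e in simp)
      moreover have "dist (Phi (sol y0 t0)) (g y0) = norm (g y0 - Phi (sol y0 t0))"
        by (metis dist_commute dist_norm)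
      ultimately have h0: "dist (Phi (sol y0 t0)) (g y0) < \<epsilon>/2" by simp
      have conth: "continuous_on S (\<lambda>y. dist (Phi (sol y t0)) (g y))"
        by (intro continuous_on_dist continuous_on_compose2[OF contPhi kcont[OF t0(1)]] contg) auto
      have e2: "\<epsilon>/2 > 0" using e by simp
      from conth y0 e2 obtain d where d0: "d > 0" and d1: "\<forall>y\<in>S. dist y y0 < d \<longrightarrow>
          dist (dist (Phi (sol y t0)) (g y)) (dist (Phi (sol y0 t0)) (g y0)) < \<epsilon>/2"
        unfolding continuous_on_iff by blast
      have "\<forall>y\<in>S. dist y y0 < d \<longrightarrow> dist (Phi (sol y t0)) (g y) < \<epsilon>"
      proof (intro ballI impI)
        fix y assume "y \<in> S" "dist y y0 < d"
        then have "dist (dist (Phi (sol y t0)) (g y)) (dist (Phi (sol y0 t0)) (g y0)) < \<epsilon>/2"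
          using d1 by blast
        with h0 show "dist (Phi (sol y t0)) (g y) < \<epsilon>"
          unfolding dist_real_def abs_less_iff by linarith
      qed
      then show ?thesis using t0(1) d0 by blast
    qed
    define Q where "Q = (\<lambda>y0 p. fst p \<ge> 0 \<and> snd p > 0 \<and>
        (\<forall>y\<in>S. dist y y0 < snd p \<longrightarrow> dist (Phi (sol y (fst p))) (g y) < \<epsilon>))"
    have Qex: "\<exists>p. Q y0 p" if "y0 \<in> S" for y0
    proof -
      from loc[OF that] obtain t0 d where "t0 \<ge> 0" "d > 0"
        "\<forall>y\<in>S. dist y y0 < d \<longrightarrow> dist (Phi (sol y t0)) (g y) < \<epsilon>" by blast
      then have "Q y0 (t0, d)" unfolding Q_def by simp
      then show ?thesis by (rule exI)
    qed
    define F where "F = (\<lambda>y0. SOME p. Q y0 p)"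
    have FQ: "Q y0 (F y0)" if "y0 \<in> S" for y0
      unfolding F_def by (rule someI_ex[OF Qex[OF that]])
    define tt where "tt = (\<lambda>y0. fst (F y0))"
    define dd where "dd = (\<lambda>y0. snd (F y0))"
    have tt1: "tt y0 \<ge> 0" and tt2: "dd y0 > 0"
      and tt3: "\<forall>y\<in>S. dist y y0 < dd y0 \<longrightarrow> dist (Phi (sol y (tt y0))) (g y) < \<epsilon>"
      if "y0 \<in> S" for y0
      using FQ[OF that] unfolding Q_def tt_def dd_def by simp_all
    have cov: "S \<subseteq> (\<Union>c\<in>S. ball c (dd c))"
    proof
      fix y assume y: "y \<in> S"
      then have "dd y > 0" by (rule tt2)
      then show "y \<in> (\<Union>c\<in>S. ball c (dd c))" by (intro UN_I[OF y]) simp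
    qed
    obtain C' where C': "C' \<subseteq> S" "finite C'" "S \<subseteq> (\<Union>c\<in>C'. ball c (dd c))"
      using compactE_image[OF compS _ cov] by blast
    define T where "T = Max (insert 0 (tt ` C'))"
    have T0: "T \<ge> 0" unfolding T_def using C'(2) by simp
    have "dist (Phi (sol y T)) (g y) < \<epsilon>" if y: "y \<in> S" for y
    proof -
      obtain c where c: "c \<in> C'" "y \<in> ball c (dd c)" using C'(3) y by blast
      have cS: "c \<in> S" using c C'(1) by blast
      have tc: "tt c \<le> T" unfolding T_def using C'(2) c(1) by simp
      have "dist y c < dd c" using c(2) by (simp add: dist_commute)
      then have "dist (Phi (sol y (tt c))) (g y) < \<epsilon>"
        using tt3[OF cS] y by blast
      moreover have "norm (g y - Phi (sol y T)) \<le> norm (g y - Phi (sol y (tt c)))"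
        by (rule norm_mono[OF sol[OF y] tt1[OF cS] tc])
      moreover have "dist (Phi (sol y T)) (g y) = norm (g y - Phi (sol y T))"
        by (metis dist_commute dist_norm)
      moreover have "dist (Phi (sol y (tt c))) (g y) = norm (g y - Phi (sol y (tt c)))"
        by (metis dist_commute dist_norm)
      ultimately show ?thesis by linarith
    qed
    then show ?thesis using T0 by blast
  qed
  have dim: "DIM('w) < DIM('w \<times> real)" by simp
  obtain \<epsilon> where e: "\<epsilon> > 0" and noapp: "\<And>k. continuous_on (sphere 0 1) k \<Longrightarrow>
      \<exists>y\<in>sphere 0 1. dist (Phi (k y)) (g y) \<ge> \<epsilon>"
    using no_approx_factor[OF dim cont inj contPhi] by blast
  obtain T where T: "T \<ge> 0" "\<And>y. y \<in> S \<Longrightarrow> dist (Phi (sol y T)) (g y) < \<epsilon>"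
    using unif[OF e] by blast
  obtain y where "y \<in> sphere 0 1" "dist (Phi (sol y T)) (g y) \<ge> \<epsilon>"
    using noapp[of "\<lambda>y. sol y T"] kcont[OF T(1)] by (auto simp: S_def)
  then show False using T(2)[of y] by (simp add: S_def)
qed




end
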